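(* Let $n\ge1$ and $a_1,\dots,a_n,b_1,\dots,b_n>0$. Put $S_a=\sum_{j=1}^n a_j^2$, $S_b=\sum_{j=1}^n b_j^2$, $$A=\frac{1}{8}\sqrt{S_aS_b}\cdot \sum_{i=1}^n \left(\frac{a_i^2}{S_a}-\frac{b_i^2}{S_b}\right)^2,$$ $$m=\min_{1\le i\le n}\min\left\{\frac{a_i^2}{S_a},\frac{b_i^2}{S_b}\right\},\qquad M=\max_{1\le i\le n}\max\left\{\frac{a_i^2}{S_a},\frac{b_i^2}{S_b}\right\}.$$ Then $$\frac{A^2}{M^2}+\frac{2A}{M}\sum_{i=1}^n a_ib_i\leq S_aS_b-\left(\sum_{i=1}^n a_ib_i\right)^2\leq \frac{A^2}{m^2}+\frac{2A}{m}\sum_{i=1}^n a_i b_i .$$ *)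

theory Defs
  imports Complex_Main
begin

end

theory Submission
  imports Defs
begin

lemma sq_bounds:
  fixes x y :: real assumes "x > 0" "y > 0"
  shows "(x + y)^2 \<le> 4 * max (x^2) (y^2) \<and> 4 * min (x^2) (y^2) \<le> (x + y)^2"
proof (cases "x \<le> y")
  case True
  have a: "x^2 \<le> y^2" using True assms by (intro power_mono) auto
  have b: "(x+y)^2 \<le> (2*y)^2" using True assms by (intro power_mono) auto
  have c: "(2*x)^2 \<le> (x+y)^2" using True assms by (intro power_mono) auto
  show ?thesis using a b c by (simp add: max_def min_def power_mult_distrib)
next
  case False
  have a: "y^2 \<le> x^2" using False assms by (intro power_mono) auto
  have b: "(x+y)^2 \<le> (2*x)^2" using False assms by (intro power_mono) auto
  have c: "(2*y)^2 \<le> (x+y)^2" using False assms by (intro power_mono) auto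
  show ?thesis using a b c by (auto simp add: max_def min_def power_mult_distrib)
qed

lemma term_bounds:
  fixes x y m M :: real assumes "x > 0" "y > 0" "m \<le> min (x^2) (y^2)" "max (x^2) (y^2) \<le> M"
  shows "(x^2 - y^2)^2 \<le> 4 * M * (x - y)^2 \<and> 4 * m * (x - y)^2 \<le> (x^2 - y^2)^2"
proof -
  have e: "(x^2 - y^2)^2 = (x - y)^2 * (x + y)^2" by (simp add: power2_eq_square algebra_simps)
  have z: "(x - y)^2 \<ge> 0" by simp
  have "(x+y)^2 \<le> 4 * M" using sq_bounds[OF assms(1,2)] assms(4) by linarith
  from mult_left_mono[OF this z] have 1: "(x^2 - y^2)^2 \<le> 4 * M * (x - y)^2" using e by (simp add: algebra_simps)
  have "4 * m \<le> (x+y)^2" using sq_bounds[OF assms(1,2)] assms(3) by linarith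
  from mult_left_mono[OF this z] have 2: "4 * m * (x - y)^2 \<le> (x^2 - y^2)^2" using e by (simp add: algebra_simps)
  show ?thesis using 1 2 by simp
qed

lemma final_up:
  fixes u c :: real assumes "1 - c \<le> u" "0 \<le> c" "c \<le> 1"
  shows "1 - c^2 \<le> u^2 + 2 * u * c"
proof -
  have "(1 - c)^2 \<le> u^2" using assms by (intro power_mono) auto
  moreover have "2*(1-c)*c \<le> 2*u*c" using assms by (intro mult_right_mono) auto
  ultimately show ?thesis by (simp add: power2_eq_square algebra_simps)
qed

lemma final_low:
  fixes v c :: real assumes "v \<le> 1 - c" "0 \<le> c" "0 \<le> v"
  shows "v^2 + 2 * v * c \<le> 1 - c^2"
proof -
  have "v^2 \<le> (1-c)^2" using assms by (intro power_mono) auto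
  moreover have "2*v*c \<le> 2*(1-c)*c" using assms by (intro mult_right_mono) auto
  ultimately show ?thesis by (simp add: power2_eq_square algebra_simps)
qed

theorem mainTheorem4:
  fixes n :: nat and a b :: "nat \<Rightarrow> real" and Sa Sb A m M :: real
  assumes "n \<ge> 1"
    and "\<And>i. i \<in> {1..n} \<Longrightarrow> a i > 0"
    and "\<And>i. i \<in> {1..n} \<Longrightarrow> b i > 0"
    and "Sa = (\<Sum>j=1..n. (a j)^2)"
    and "Sb = (\<Sum>j=1..n. (b j)^2)"
    and "A = 1/8 * sqrt (Sa * Sb) * (\<Sum>i=1..n. ((a i)^2 / Sa - (b i)^2 / Sb)^2)"
    and "m = Min ((\<lambda>i. min ((a i)^2 / Sa) ((b i)^2 / Sb)) ` {1..n})"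
    and "M = Max ((\<lambda>i. max ((a i)^2 / Sa) ((b i)^2 / Sb)) ` {1..n})"
  shows "A^2 / M^2 + 2 * A / M * (\<Sum>i=1..n. a i * b i) \<le> Sa * Sb - (\<Sum>i=1..n. a i * b i)^2
     \<and> Sa * Sb - (\<Sum>i=1..n. a i * b i)^2 \<le> A^2 / m^2 + 2 * A / m * (\<Sum>i=1..n. a i * b i)"
proof -
  note apos = assms(2) and bpos = assms(3)
  have ne: "{1..n} \<noteq> {}" using assms(1) by auto
  have Sa: "Sa > 0" unfolding assms(4)
    by (rule sum_pos) (use ne apos in \<open>fastforce+\<close>)
  have Sb: "Sb > 0" unfolding assms(5)
    by (rule sum_pos) (use ne bpos in \<open>fastforce+\<close>)
  define ra where "ra = sqrt Sa"
  define rb where "rb = sqrt Sb"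
  have ra: "ra > 0" "ra^2 = Sa" using Sa by (auto simp: ra_def)
  have rb: "rb > 0" "rb^2 = Sb" using Sb by (auto simp: rb_def)
  define P where "P = sqrt (Sa * Sb)"
  have P: "P = ra * rb" unfolding P_def ra_def rb_def by (simp add: real_sqrt_mult)
  have Ppos: "P > 0" using P ra rb by simp
  define x where "x i = a i / ra" for i
  define y where "y i = b i / rb" for i
  have x2: "x i ^2 = a i^2 / Sa" for i using ra by (simp add: x_def power_divide)
  have y2: "y i ^2 = b i^2 / Sb" for i using rb by (simp add: y_def power_divide)
  have xpos: "x i > 0" if "i \<in> {1..n}" for i using apos[OF that] ra by (simp add: x_def)
  have ypos: "y i > 0" if "i \<in> {1..n}" for i using bpos[OF that] rb by (simp add: y_def)
  have sx: "(\<Sum>i=1..n. x i ^2) = 1" unfolding x2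
    using Sa by (simp add: sum_divide_distrib[symmetric] assms(4))
  have sy: "(\<Sum>i=1..n. y i ^2) = 1" unfolding y2
    using Sb by (simp add: sum_divide_distrib[symmetric] assms(5))
  define S where "S = (\<Sum>i=1..n. a i * b i)"
  define c where "c = (\<Sum>i=1..n. x i * y i)"
  have Sc: "S = c * P"
  proof -
    have "c = (\<Sum>i=1..n. a i * b i) / P"
      unfolding c_def x_def y_def P by (simp add: sum_divide_distrib)
    then show ?thesis using Ppos unfolding S_def by simp
  qed
  have cpos: "c \<ge> 0" unfolding c_def
    by (rule sum_nonneg) (use xpos ypos in \<open>auto intro: less_imp_le\<close>)
  define t where "t = 1/8 * (\<Sum>i=1..n. (x i ^2 - y i ^2)^2)"
  have At: "A = t * P" unfolding assms(6) t_def x2 y2 P_def by simp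
  have oc: "1 - c = 1/2 * (\<Sum>i=1..n. (x i - y i)^2)"
  proof -
    have "(\<Sum>i=1..n. (x i - y i)^2) = (\<Sum>i=1..n. x i ^2) + (\<Sum>i=1..n. y i ^2) - 2 * c"
      unfolding c_def by (simp add: power2_diff sum.distrib sum_subtractf sum_distrib_left mult.assoc)
    then show ?thesis using sx sy by simp
  qed
  have fin: "finite {1..n}" by simp
  have mle: "m \<le> min (x i ^2) (y i ^2)" if "i \<in> {1..n}" for i
    unfolding assms(7) x2 y2 using that fin by (intro Min_le) auto
  have Mge: "max (x i ^2) (y i ^2) \<le> M" if "i \<in> {1..n}" for i
    unfolding assms(8) x2 y2 using that fin by (intro Max_ge) auto
  have mpos: "m > 0"
  proof -
    have "m \<in> (\<lambda>i. min ((a i)^2 / Sa) ((b i)^2 / Sb)) ` {1..n}"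
      unfolding assms(7) using ne fin by (intro Min_in) auto
    then obtain i where i: "i \<in> {1..n}" "m = min ((a i)^2 / Sa) ((b i)^2 / Sb)" by auto
    then show ?thesis using apos[OF i(1)] bpos[OF i(1)] Sa Sb by simp
  qed
  have Mpos: "M > 0" using Mge[of 1] mle[of 1] mpos assms(1) by auto
  have tb: "(x i ^2 - y i ^2)^2 \<le> 4 * M * (x i - y i)^2 \<and> 4 * m * (x i - y i)^2 \<le> (x i ^2 - y i ^2)^2"
    if "i \<in> {1..n}" for i
    using term_bounds[OF xpos[OF that] ypos[OF that] mle[OF that] Mge[OF that]] .
  have tup: "t \<le> M * (1 - c)"
  proof -
    have "(\<Sum>i=1..n. (x i ^2 - y i ^2)^2) \<le> (\<Sum>i=1..n. 4 * M * (x i - y i)^2)"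
      by (rule sum_mono) (use tb in blast)
    then show ?thesis unfolding t_def oc by (simp add: sum_distrib_left[symmetric])
  qed
  have tlow: "m * (1 - c) \<le> t"
  proof -
    have "(\<Sum>i=1..n. 4 * m * (x i - y i)^2) \<le> (\<Sum>i=1..n. (x i ^2 - y i ^2)^2)"
      by (rule sum_mono) (use tb in blast)
    then show ?thesis unfolding t_def oc by (simp add: sum_distrib_left[symmetric])
  qed
  have "(\<Sum>i=1..n. (x i - y i)^2) \<ge> 0" by (simp add: sum_nonneg)
  then have c1: "c \<le> 1" using oc by linarith
  have tnn: "t \<ge> 0" unfolding t_def by (simp add: sum_nonneg)
  have SaSb: "Sa * Sb = P^2" using P ra rb by (simp add: power_mult_distrib)
  have low: "(t/M)^2 + 2 * (t/M) * c \<le> 1 - c^2"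
    using final_low[of "t/M" c] tup Mpos cpos tnn by (simp add: pos_divide_le_eq mult.commute)
  have up: "1 - c^2 \<le> (t/m)^2 + 2 * (t/m) * c"
    using final_up[of c "t/m"] tlow mpos cpos c1 by (simp add: pos_le_divide_eq mult.commute)
  have eqL: "A^2 / M^2 + 2 * A / M * S = P^2 * ((t/M)^2 + 2 * (t/M) * c)"
    unfolding At Sc by (simp add: power2_eq_square field_simps)
  have eqU: "A^2 / m^2 + 2 * A / m * S = P^2 * ((t/m)^2 + 2 * (t/m) * c)"
    unfolding At Sc by (simp add: power2_eq_square field_simps)
  have eqM: "Sa * Sb - S^2 = P^2 * (1 - c^2)"
    unfolding SaSb Sc by (simp add: power2_eq_square field_simps)
  have P2: "P^2 > 0" using Ppos by simp
  show ?thesis unfolding S_def[symmetric] eqL eqU eqM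
    using mult_left_mono[OF low, of "P^2"] mult_left_mono[OF up, of "P^2"] P2 by simp
qed

end
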